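(* In the setting below, let $\overline S_i=S_a\times\{b\}$ and $\overline S_j=S_b\times\{c\}$ for some $1\le i,j\le\overline M$, $1\le a,b,c\le M$. Then for every bounded continuous $f:[0,\infty)\to\mathbb R$, $$\lim_{\varepsilon\downarrow0}\Big(\mathbb E f\Big(\frac{\overline T^\varepsilon(\bar x,\overline S_j)}{\overline\tau^\varepsilon_i}\Big)-\mathbb E f\Big(\frac{T^\varepsilon(y,S_b)}{\tau^\varepsilon_{ab}}\Big)\Big)=0$$ uniformly in $\bar x\in\overline S_i$, $y\in S_a$, where $\overline\tau^\varepsilon_i:=\tau^\varepsilon_{ab}$.
   Context: $S$ is a metric space partitioned into disjoint Borel sets $S_1,\dots,S_M$; for $\varepsilon>0$, $Q^\varepsilon$ is a Markov kernel from $S$ to $S\times[0,\infty)$, $P^\varepsilon(x,B)=Q^\varepsilon(x,B\times[0,\infty))$, and for $P^\varepsilon(x,B)>0$, $T^\varepsilon(x,B)$ has law $\mathbb P(T^\varepsilon(x,B)\le t)=Q^\varepsilon(x,B\times[0,t])/P^\varepsilon(x,B)$. Assumptions: $P^\varepsilon(x,S_i)=0$ for $x\in S_i$; for $i\ne j$, either $P^\varepsilon(x,S_j)=0$ for all $x\in S_i,\varepsilon$ (set $P^\varepsilon_{ij}\equiv0$) or it is positive for all $x\in S_i,\varepsilon$ and there are positive $P^\varepsilon_{ij}$ with $P^\varepsilon(x,S_j)/P^\varepsilon_{ij}\to1$ uniformly in $x\in S_i$; for $P^\varepsilon_{ij}\not\equiv0$ there are positive $\tau^\varepsilon_{ij}$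 with $\mathbb ET^\varepsilon(x,S_j)/\tau^\varepsilon_{ij}\to1$ uniformly in $x\in S_i$; and for every bounded continuous $f$ and $P^\varepsilon_{ij}\not\equiv0$, $\mathbb E f(T^\varepsilon(x_1,S_j)/\tau^\varepsilon_{ij})-\mathbb E f(T^\varepsilon(x_2,S_j)/\tau^\varepsilon_{ij})\to0$ uniformly in $x_1,x_2\in S_i$. Extended process: $\overline S=\{(x,j):x\in S_i,\ P^\varepsilon_{ij}\not\equiv0\}$ with kernel $\overline Q^\varepsilon((x,j),(A\times\{k\})\times I)=\frac{1}{P^\varepsilon(x,S_j)}\int_{A\cap S_j}P^\varepsilon(y,S_k)Q^\varepsilon(x,dy\times I)$; $\overline S$ is partitioned into the sets $S_a\times\{b\}$ with $P^\varepsilon_{ab}\not\equiv0$, re-indexed $\overline S_1,\dots,\overline S_{\overline M}$; $\overline P^\varepsilon(\bar x,B)=\overline Q^\varepsilon(\bar x,B\times[0,\infty))$, and $\overline T^\varepsilon(\bar x,B)$ has law $\overline Q^\varepsilon(\bar x,B\times\cdot)/\overline P^\varepsilon(\bar x,B)$. *)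

theory Defs
  imports "HOL-Probability.Probability"
begin

text \<open>A kernel Q : real => 'b => ('b x real) measure; for each eps, x the measure Q eps x
  is a probability measure on pairs (next state, holding time).\<close>

definition Pk :: "('b \<times> real) measure \<Rightarrow> 'b set \<Rightarrow> real" where
  "Pk \<mu> B = measure \<mu> (B \<times> {0..})"

text \<open>Law of the time T(x,B): P(T \<le> t) = Q(x, B x [0,t]) / P(x,B).\<close>
definition Tlaw :: "('b \<times> real) measure \<Rightarrow> 'b set \<Rightarrow> real measure" where
  "Tlaw \<mu> B = scale_measure (ennreal (1 / Pk \<mu> B))
                 (distr (density \<mu> (indicator (B \<times> {0..}))) borel snd)"

definition ET :: "('b \<times> real) measure \<Rightarrow> 'b set \<Rightarrow> (real \<Rightarrow> real) \<Rightarrow> real" where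
  "ET \<mu> B g = (\<integral>t. g t \<partial>Tlaw \<mu> B)"

definition meanT :: "('b \<times> real) measure \<Rightarrow> 'b set \<Rightarrow> real" where
  "meanT \<mu> B = enn2real (\<integral>\<^sup>+ t. ennreal t \<partial>Tlaw \<mu> B)"

definition conn :: "(nat \<Rightarrow> nat \<Rightarrow> real \<Rightarrow> real) \<Rightarrow> nat \<Rightarrow> nat \<Rightarrow> bool" where
  "conn Pc i j \<longleftrightarrow> (\<exists>\<epsilon>>0. Pc i j \<epsilon> \<noteq> 0)"

text \<open>Extended kernel on ('a x nat) x real:
  Qbar((x,j), (A x {k}) x I) = 1/P(x,S_j) * \<integral>_{A \<inter> S_j} P(y,S_k) Q(x, dy x I).\<close>
definition Qbar :: "nat \<Rightarrow> (nat \<Rightarrow> 'a::metric_space set) \<Rightarrow> (real \<Rightarrow> 'a \<Rightarrow> ('a \<times> real) measure)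
      \<Rightarrow> real \<Rightarrow> 'a \<times> nat \<Rightarrow> (('a \<times> nat) \<times> real) measure" where
  "Qbar M S Q \<epsilon> xj =
     measure_of UNIV (sets ((borel \<Otimes>\<^sub>M count_space UNIV) \<Otimes>\<^sub>M borel))
       (\<lambda>C. \<integral>\<^sup>+ z. (\<Sum>k\<in>{1..M}. indicator C ((fst z, k), snd z)
               * indicator (S (snd xj)) (fst z)
               * ennreal (Pk (Q \<epsilon> (fst z)) (S k) / Pk (Q \<epsilon> (fst xj)) (S (snd xj)))) \<partial>Q \<epsilon> (fst xj))"

end

theory Submission
  imports Defs
begin


lemma scale_density:
  assumes "0 \<le> c"
  shows "scale_measure (ennreal c) N = density N (\<lambda>_. ennreal c)"
proof (rule measure_eqI)
  show "sets (scale_measure (ennreal c) N) = sets (density N (\<lambda>_. ennreal c))" by simp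
  fix A assume "A \<in> sets (scale_measure (ennreal c) N)"
  then have A: "A \<in> sets N" by simp
  then show "emeasure (scale_measure (ennreal c) N) A = emeasure (density N (\<lambda>_. ennreal c)) A"
    by (simp add: emeasure_density nn_integral_cmult_indicator)
qed

lemma integral_scale_real:
  fixes g :: "'b \<Rightarrow> real"
  assumes "0 \<le> c" "g \<in> borel_measurable N"
  shows "integral\<^sup>L (scale_measure (ennreal c) N) g = c * integral\<^sup>L N g"
  using assms by (simp add: scale_density integral_density)

lemma ET_formula:
  fixes h :: "'b \<times> real \<Rightarrow> real" and g :: "real \<Rightarrow> real"
  assumes sets: "sets \<mu> = sets (N \<Otimes>\<^sub>M borel)"
    and hm: "h \<in> borel_measurable \<mu>" and hpos: "\<And>z. 0 \<le> h z"
    and gm: "g \<in> borel_measurable borel" and r: "0 \<le> r"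
  shows "integral\<^sup>L (scale_measure (ennreal r) (distr (density \<mu> (\<lambda>z. ennreal (h z))) borel snd)) g
         = r * (\<integral>z. h z * g (snd z) \<partial>\<mu>)"
proof -
  have sm: "snd \<in> measurable \<mu> borel"
    using measurable_cong_sets[OF sets refl] measurable_snd by blast
  have sm2: "snd \<in> measurable (density \<mu> (\<lambda>z. ennreal (h z))) borel"
    using sm by simp
  show ?thesis
    apply (subst integral_scale_real[OF r])
    using gm apply simp
    apply (subst integral_distr[OF sm2 gm])
    apply (subst integral_density)
    using gm sm hm hpos by auto
qed

lemma my_abs_bound:
  fixes f g :: "'b \<Rightarrow> real"
  assumes "integrable M f" "integrable M g" "\<And>x. \<bar>f x\<bar> \<le> g x"
  shows "\<bar>\<integral>x. f x \<partial>M\<bar> \<le> (\<integral>x. g x \<partial>M)"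
proof -
  have "\<bar>\<integral>x. f x \<partial>M\<bar> \<le> (\<integral>x. \<bar>f x\<bar> \<partial>M)" by (rule integral_abs_bound)
  also have "\<dots> \<le> (\<integral>x. g x \<partial>M)" using assms by (intro integral_mono) auto
  finally show ?thesis .
qed

lemma ratio_est:
  fixes U V G :: "'b \<Rightarrow> real"
  assumes fin: "finite_measure \<mu>"
    and Ui: "integrable \<mu> U" and Vm: "V \<in> borel_measurable \<mu>" and Gm: "G \<in> borel_measurable \<mu>"
    and U0: "\<And>z. 0 \<le> U z" and Upos: "0 < integral\<^sup>L \<mu> U"
    and k: "0 < k" and VU: "\<And>z. \<bar>k * V z - U z\<bar> \<le> \<delta> * U z"
    and GB: "\<And>z. U z \<noteq> 0 \<Longrightarrow> \<bar>G z\<bar> \<le> B"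
    and d: "0 \<le> \<delta>" "\<delta> \<le> 1/2" and B: "0 \<le> B"
  shows "\<bar>(\<integral>z. V z * G z \<partial>\<mu>) / integral\<^sup>L \<mu> V - (\<integral>z. U z * G z \<partial>\<mu>) / integral\<^sup>L \<mu> U\<bar> \<le> 4 * B * \<delta>"
proof -
  define W where "W z = k * V z" for z
  have Wm: "W \<in> borel_measurable \<mu>" unfolding W_def using Vm by simp
  have Wb: "norm (W z) \<le> norm ((1+\<delta>) * U z)" for z
    using VU[of z] U0[of z] d unfolding W_def by (auto simp: abs_le_iff algebra_simps)
  have Wi: "integrable \<mu> W"
    by (rule Bochner_Integration.integrable_bound[of _ "\<lambda>z. (1+\<delta>) * U z", OF _ Wm]) (use Ui Wb in auto)
  have UGb: "norm (U z * G z) \<le> norm (B * U z)" for z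
    using GB[of z] U0[of z] B by (cases "U z = 0") (auto simp: abs_mult mult_right_mono mult.commute)
  have WGb: "norm (W z * G z) \<le> norm ((1+\<delta>) * B * U z)" for z
  proof (cases "U z = 0")
    case True
    then have "W z = 0" using VU[of z] d unfolding W_def by auto
    then show ?thesis using U0[of z] B d by simp
  next
    case False
    have "\<bar>W z\<bar> \<le> (1+\<delta>) * U z" using Wb[of z] U0[of z] d by simp
    moreover have "\<bar>G z\<bar> \<le> B" using GB False by blast
    ultimately have "\<bar>W z\<bar> * \<bar>G z\<bar> \<le> ((1+\<delta>) * U z) * B"
      by (intro mult_mono) auto
    then show ?thesis using U0[of z] B d by (simp add: abs_mult algebra_simps)
  qed
  have UGi: "integrable \<mu> (\<lambda>z. U z * G z)"
    by (rule Bochner_Integration.integrable_bound[of _ "\<lambda>z. B * U z"]) (use Ui Gm Ui UGb in auto)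
  have WGi: "integrable \<mu> (\<lambda>z. W z * G z)"
    by (rule Bochner_Integration.integrable_bound[of _ "\<lambda>z. (1+\<delta>) * B * U z"]) (use Ui Gm Wm WGb in auto)
  define u where "u = integral\<^sup>L \<mu> U"
  define w where "w = integral\<^sup>L \<mu> W"
  define ug where "ug = (\<integral>z. U z * G z \<partial>\<mu>)"
  define wg where "wg = (\<integral>z. W z * G z \<partial>\<mu>)"
  have "\<bar>w - u\<bar> = \<bar>\<integral>z. W z - U z \<partial>\<mu>\<bar>" unfolding w_def u_def using Wi Ui by simp
  also have "\<dots> \<le> (\<integral>z. \<delta> * U z \<partial>\<mu>)"
    by (rule my_abs_bound) (use Wi Ui VU in \<open>auto simp: W_def[symmetric]\<close>)
  also have "\<dots> = \<delta> * u" unfolding u_def by simp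
  finally have wu: "\<bar>w - u\<bar> \<le> \<delta> * u" .
  have "\<bar>wg - ug\<bar> = \<bar>\<integral>z. W z * G z - U z * G z \<partial>\<mu>\<bar>" unfolding wg_def ug_def using WGi UGi by simp
  also have "\<dots> \<le> (\<integral>z. \<delta> * B * U z \<partial>\<mu>)"
  proof (rule my_abs_bound)
    show "integrable \<mu> (\<lambda>z. W z * G z - U z * G z)" using WGi UGi by simp
    show "integrable \<mu> (\<lambda>z. \<delta> * B * U z)" using Ui by simp
    fix z
    show "\<bar>W z * G z - U z * G z\<bar> \<le> \<delta> * B * U z"
    proof (cases "U z = 0")
      case True
      then have "W z = 0" using VU[of z] d unfolding W_def by auto
      then show ?thesis using True by simp
    next
      case False
      have "\<bar>W z * G z - U z * G z\<bar> = \<bar>W z - U z\<bar> * \<bar>G z\<bar>" by (simp add: abs_mult left_diff_distrib[symmetric])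
      also have "\<dots> \<le> (\<delta> * U z) * B"
        using VU[of z] GB[OF False] d U0[of z] by (intro mult_mono) (auto simp: W_def)
      finally show ?thesis by (simp add: algebra_simps)
    qed
  qed
  also have "\<dots> = \<delta> * B * u" unfolding u_def by simp
  finally have wgug: "\<bar>wg - ug\<bar> \<le> \<delta> * B * u" .
  have ugb: "\<bar>ug\<bar> \<le> B * u"
  proof -
    have "\<bar>ug\<bar> \<le> (\<integral>z. B * U z \<partial>\<mu>)" unfolding ug_def
      by (rule my_abs_bound) (use UGi Ui in simp, use Ui in simp, metis UGb U0 B abs_of_nonneg mult_nonneg_nonneg real_norm_def)
    then show ?thesis unfolding u_def by simp
  qed
  have upos: "u > 0" using Upos u_def by simp
  have du: "\<delta> * u \<le> (1/2) * u" using d upos by (intro mult_right_mono) auto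
  have wlow: "w \<ge> u / 2" using wu du by (auto simp: abs_le_iff)
  have wpos: "w > 0" using wlow upos by simp
  have eq1: "(\<integral>z. V z * G z \<partial>\<mu>) / integral\<^sup>L \<mu> V = wg / w"
  proof -
    have "wg = k * (\<integral>z. V z * G z \<partial>\<mu>)" unfolding wg_def W_def by (simp add: mult.assoc)
    moreover have "w = k * integral\<^sup>L \<mu> V" unfolding w_def W_def by simp
    ultimately show ?thesis using k by simp
  qed
  have "wg / w - ug / u = (wg - ug) / w + ug * (u - w) / (w * u)"
    using wpos upos by (simp add: field_simps)
  then have "\<bar>wg / w - ug / u\<bar> \<le> \<bar>wg - ug\<bar> / w + \<bar>ug\<bar> * \<bar>u - w\<bar> / (w * u)"
  proof -
    have "\<bar>(wg - ug) / w + ug * (u - w) / (w * u)\<bar> \<le> \<bar>(wg - ug) / w\<bar> + \<bar>ug * (u - w) / (w * u)\<bar>"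
      by (rule abs_triangle_ineq)
    also have "\<dots> = \<bar>wg - ug\<bar> / w + \<bar>ug\<bar> * \<bar>u - w\<bar> / (w * u)"
      using wpos upos by (simp add: abs_divide abs_mult)
    finally show ?thesis using \<open>wg / w - ug / u = _\<close> by simp
  qed
  also have "\<dots> \<le> (\<delta> * B * u) / (u/2) + (B * u) * (\<delta> * u) / ((u/2) * u)"
  proof (rule add_mono)
    show "\<bar>wg - ug\<bar> / w \<le> \<delta> * B * u / (u / 2)"
      by (rule frac_le) (use wgug wlow upos d B in auto)
    have n: "\<bar>ug\<bar> * \<bar>u - w\<bar> \<le> (B * u) * (\<delta> * u)"
      by (rule mult_mono) (use ugb wu upos d B in \<open>auto simp: abs_minus_commute\<close>)
    have dd: "(u/2) * u \<le> w * u" using wlow upos by (intro mult_right_mono) auto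
    show "\<bar>ug\<bar> * \<bar>u - w\<bar> / (w * u) \<le> B * u * (\<delta> * u) / (u / 2 * u)"
      by (rule frac_le) (use n dd upos d B in auto)
  qed
  also have "\<dots> = 4 * B * \<delta>" using upos by (simp add: field_simps)
  finally show ?thesis using eq1 unfolding ug_def u_def by simp
qed




lemma Pk_meas:
  fixes Q :: "'a::metric_space \<Rightarrow> ('a \<times> real) measure"
  assumes km: "\<And>A. A \<in> sets (borel \<Otimes>\<^sub>M borel) \<Longrightarrow> (\<lambda>x. emeasure (Q x) A) \<in> borel_measurable borel"
    and B: "B \<in> sets borel"
  shows "(\<lambda>y. Pk (Q y) B) \<in> borel_measurable borel"
proof -
  have "B \<times> {0..} \<in> sets (borel \<Otimes>\<^sub>M (borel :: real measure))"
    using B by (intro pair_measureI) auto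
  from km[OF this] show ?thesis
    unfolding Pk_def measure_def by (rule borel_measurable_enn2real)
qed

lemma Qbar_Tlaw:
  fixes S :: "nat \<Rightarrow> 'a::metric_space set" and Q :: "real \<Rightarrow> 'a \<Rightarrow> ('a \<times> real) measure"
  assumes ks: "\<And>y. sets (Q \<epsilon> y) = sets (borel \<Otimes>\<^sub>M borel)"
    and kp: "\<And>y. prob_space (Q \<epsilon> y)"
    and km: "\<And>A. A \<in> sets (borel \<Otimes>\<^sub>M borel) \<Longrightarrow> (\<lambda>x. emeasure (Q \<epsilon> x) A) \<in> borel_measurable borel"
    and Sb: "\<And>i. i \<in> {1..M} \<Longrightarrow> S i \<in> sets borel"
    and b: "b \<in> {1..M}" and c: "c \<in> {1..M}"
    and hh: "hh = (\<lambda>z. indicator (S b \<times> {0..}) z * (Pk (Q \<epsilon> (fst z)) (S c) / Pk (Q \<epsilon> x) (S b)))"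
  shows "Tlaw (Qbar M S Q \<epsilon> (x,b)) (S b \<times> {c}) =
           scale_measure (ennreal (1 / (\<integral>z. hh z \<partial>Q \<epsilon> x)))
             (distr (density (Q \<epsilon> x) (\<lambda>z. ennreal (hh z))) borel snd)"
proof -
  define \<Omega> where "\<Omega> = ((borel \<Otimes>\<^sub>M count_space UNIV) \<Otimes>\<^sub>M borel :: (('a \<times> nat) \<times> real) measure)"
  have sp\<Omega>: "space \<Omega> = UNIV" unfolding \<Omega>_def by (simp add: space_pair_measure)
  define Qx where "Qx = Q \<epsilon> x"
  interpret Qx: prob_space Qx unfolding Qx_def by (rule kp)
  have spQ: "space (Q \<epsilon> y) = UNIV" for y
    using sets_eq_imp_space_eq[OF ks[of y]] by (simp add: space_pair_measure)
  have Pm: "(\<lambda>y. Pk (Q \<epsilon> y) (S k)) \<in> borel_measurable borel" if "k \<in> {1..M}" for k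
    by (rule Pk_meas[OF km Sb[OF that]])
  define wk where "wk k z = indicator (S b) (fst z) * ennreal (Pk (Q \<epsilon> (fst z)) (S k) / Pk Qx (S b))"
    for k and z :: "'a \<times> real"
  have wkm: "wk k \<in> borel_measurable Qx" if "k \<in> {1..M}" for k
  proof -
    have "wk k \<in> borel_measurable (borel \<Otimes>\<^sub>M borel)"
      unfolding wk_def using Pm[OF that] Sb[OF b] by measurable
    then show ?thesis using measurable_cong_sets[OF ks[of x] refl] unfolding Qx_def by blast
  qed
  have indm: "(\<lambda>z. indicator C ((fst z, k), snd z) :: ennreal) \<in> borel_measurable Qx"
    if "C \<in> sets \<Omega>" for C k
  proof -
    have "(\<lambda>z::'a\<times>real. ((fst z, k), snd z)) \<in> measurable (borel \<Otimes>\<^sub>M borel) \<Omega>"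
      unfolding \<Omega>_def by measurable
    then have "(\<lambda>z. indicator C ((fst z, k), snd z) :: ennreal) \<in> borel_measurable (borel \<Otimes>\<^sub>M borel)"
      using that by (intro measurable_compose[OF _ borel_measurable_indicator]) auto
    then show ?thesis using measurable_cong_sets[OF ks[of x] refl] unfolding Qx_def by blast
  qed
  have summ: "(\<lambda>z. \<Sum>k\<in>{1..M}. indicator C ((fst z, k), snd z) * wk k z) \<in> borel_measurable Qx"
    if "C \<in> sets \<Omega>" for C
    by (intro borel_measurable_sum borel_measurable_times_ennreal indm[OF that] wkm)
  define \<mu> where "\<mu> C = (\<integral>\<^sup>+ z. (\<Sum>k\<in>{1..M}. indicator C ((fst z, k), snd z) * wk k z) \<partial>Qx)" for C
  have Qbar_eq: "Qbar M S Q \<epsilon> (x,b) = measure_of (space \<Omega>) (sets \<Omega>) \<mu>"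
    unfolding sp\<Omega> unfolding Qbar_def \<mu>_def wk_def Qx_def \<Omega>_def by (simp add: mult.assoc)
  have pos: "positive (sets \<Omega>) \<mu>" unfolding positive_def \<mu>_def by simp
  have ca: "countably_additive (sets \<Omega>) \<mu>"
    unfolding countably_additive_def
  proof (intro allI impI)
    fix A :: "nat \<Rightarrow> (('a \<times> nat) \<times> real) set"
    assume A: "range A \<subseteq> sets \<Omega>" "disjoint_family A" "\<Union> (range A) \<in> sets \<Omega>"
    have "(\<Sum>i. \<mu> (A i)) = (\<integral>\<^sup>+ z. (\<Sum>i. \<Sum>k\<in>{1..M}. indicator (A i) ((fst z, k), snd z) * wk k z) \<partial>Qx)"
      unfolding \<mu>_def
      by (rule nn_integral_suminf[symmetric]) (use A summ in auto)
    also have "\<dots> = (\<integral>\<^sup>+ z. (\<Sum>k\<in>{1..M}. (\<Sum>i. indicator (A i) ((fst z, k), snd z)) * wk k z) \<partial>Qx)"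
      by (intro nn_integral_cong) (simp only: suminf_sum[OF summableI] ennreal_suminf_multc)
    also have "\<dots> = \<mu> (\<Union> (range A))"
      unfolding \<mu>_def by (simp add: suminf_indicator[OF A(2)])
    finally show "(\<Sum>i. \<mu> (A i)) = \<mu> (\<Union> (range A))" .
  qed
  have emQ: "emeasure (Qbar M S Q \<epsilon> (x,b)) C = \<mu> C" if "C \<in> sets \<Omega>" for C
    unfolding Qbar_eq by (rule emeasure_measure_of_sigma[OF sets.sigma_algebra_axioms pos ca that])
  have setsQ: "sets (Qbar M S Q \<epsilon> (x,b)) = sets \<Omega>" unfolding Qbar_eq by simp
  define D' where "D' = (S b \<times> {c}) \<times> ({0..} :: real set)"
  have D'm: "D' \<in> sets \<Omega>" unfolding D'_def \<Omega>_def using Sb[OF b]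
    by (intro pair_measureI) auto
  define F where "F z = ((fst z, c), snd z)" for z :: "'a \<times> real"
  have hhm: "hh \<in> borel_measurable Qx"
  proof -
    have "hh \<in> borel_measurable (borel \<Otimes>\<^sub>M borel)"
      unfolding hh using Pm[OF c] Sb[OF b] by measurable
    then show ?thesis using measurable_cong_sets[OF ks[of x] refl] unfolding Qx_def by blast
  qed
  have hh0: "0 \<le> hh z" for z unfolding hh by (auto simp: Pk_def indicator_def)
  have Pkle: "Pk (Q \<epsilon> y) B \<le> 1" for y B
    unfolding Pk_def using prob_space.prob_le_1[OF kp] by blast
  have hhb: "norm (hh z) \<le> 1 / Pk Qx (S b)" for z
    using hh0[of z] Pkle[of "fst z" "S c"] unfolding hh Qx_def
    by (auto simp: indicator_def Pk_def divide_right_mono)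
  have hhi: "integrable Qx hh"
    by (rule Qx.integrable_const_bound[where B="1 / Pk Qx (S b)", OF _ hhm]) (use hhb in auto)
  have Fm: "F \<in> measurable Qx \<Omega>"
  proof -
    have "F \<in> measurable (borel \<Otimes>\<^sub>M borel) \<Omega>" unfolding F_def \<Omega>_def by measurable
    then show ?thesis using measurable_cong_sets[OF ks[of x] refl] unfolding Qx_def by blast
  qed
  have pt: "(\<Sum>k\<in>{1..M}. indicator (D' \<inter> C) ((fst z, k), snd z) * wk k z)
            = ennreal (hh z) * indicator (F -` C) z" for C z
  proof (cases "fst z \<in> S b \<and> snd z \<ge> 0")
    case True
    have "(\<Sum>k\<in>{1..M}. indicator (D' \<inter> C) ((fst z, k), snd z) * wk k z)
          = (\<Sum>k\<in>{1..M}. if k = c then indicator C ((fst z, c), snd z) * wk c z else 0)"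
      by (rule sum.cong) (use True in \<open>auto simp: D'_def indicator_def\<close>)
    also have "\<dots> = indicator C ((fst z, c), snd z) * wk c z" using c by simp
    also have "\<dots> = ennreal (hh z) * indicator (F -` C) z"
      using True unfolding wk_def hh F_def Qx_def by (auto simp: indicator_def mem_Times_iff)
    finally show ?thesis .
  next
    case False
    then show ?thesis unfolding hh D'_def by (auto simp: indicator_def mem_Times_iff intro!: sum.neutral)
  qed
  have dens_eq: "density (Qbar M S Q \<epsilon> (x,b)) (indicator D') = distr (density Qx (\<lambda>z. ennreal (hh z))) \<Omega> F"
  proof (rule measure_eqI)
    show "sets (density (Qbar M S Q \<epsilon> (x,b)) (indicator D')) = sets (distr (density Qx (\<lambda>z. ennreal (hh z))) \<Omega> F)"
      using setsQ by simp
    fix C assume "C \<in> sets (density (Qbar M S Q \<epsilon> (x,b)) (indicator D'))"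
    then have C: "C \<in> sets \<Omega>" using setsQ by simp
    have "emeasure (density (Qbar M S Q \<epsilon> (x,b)) (indicator D')) C = \<mu> (D' \<inter> C)"
      using emeasure_restricted[of D' "Qbar M S Q \<epsilon> (x,b)" C] D'm C setsQ emQ[of "D' \<inter> C"] by auto
    also have "\<dots> = (\<integral>\<^sup>+ z. ennreal (hh z) * indicator (F -` C \<inter> space (density Qx (\<lambda>z. ennreal (hh z)))) z \<partial>Qx)"
      unfolding \<mu>_def pt using spQ unfolding Qx_def by simp
    also have "\<dots> = emeasure (distr (density Qx (\<lambda>z. ennreal (hh z))) \<Omega> F) C"
      using Fm C hhm by (simp add: emeasure_distr emeasure_density)
    finally show "emeasure (density (Qbar M S Q \<epsilon> (x,b)) (indicator D')) C = emeasure (distr (density Qx (\<lambda>z. ennreal (hh z))) \<Omega> F) C" .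
  qed
  have "emeasure (Qbar M S Q \<epsilon> (x,b)) D' = emeasure (density (Qbar M S Q \<epsilon> (x,b)) (indicator D')) (space \<Omega>)"
    using emeasure_restricted[of D' "Qbar M S Q \<epsilon> (x,b)" "space \<Omega>"] D'm setsQ by auto
  also have "\<dots> = emeasure (density Qx (\<lambda>z. ennreal (hh z))) (F -` space \<Omega> \<inter> space (density Qx (\<lambda>z. ennreal (hh z))))"
    unfolding dens_eq using Fm by (intro emeasure_distr) auto
  also have "\<dots> = emeasure (density Qx (\<lambda>z. ennreal (hh z))) (space Qx)"
    by (simp add: sp\<Omega>)
  also have "\<dots> = (\<integral>\<^sup>+ z. ennreal (hh z) \<partial>Qx)"
    using hhm by (simp add: emeasure_density)
  also have "\<dots> = ennreal (integral\<^sup>L Qx hh)"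
    by (rule nn_integral_eq_integral[OF hhi]) (use hh0 in auto)
  finally have PkQ: "Pk (Qbar M S Q \<epsilon> (x,b)) (S b \<times> {c}) = integral\<^sup>L Qx hh"
    unfolding Pk_def D'_def measure_def using hh0 by (simp add: integral_nonneg)
  have snm: "snd \<in> measurable \<Omega> borel" unfolding \<Omega>_def by simp
  have Fm2: "F \<in> measurable (density Qx (\<lambda>z. ennreal (hh z))) \<Omega>" using Fm by simp
  have "distr (distr (density Qx (\<lambda>z. ennreal (hh z))) \<Omega> F) borel snd
        = distr (density Qx (\<lambda>z. ennreal (hh z))) borel (snd \<circ> F)"
    by (rule distr_distr[OF snm Fm2])
  also have "snd \<circ> F = snd" unfolding F_def by auto
  finally have dd: "distr (distr (density Qx (\<lambda>z. ennreal (hh z))) \<Omega> F) borel snd = distr (density Qx (\<lambda>z. ennreal (hh z))) borel snd" .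
  show ?thesis
    unfolding Tlaw_def PkQ D'_def[symmetric]
    using dens_eq dd by (simp add: Qx_def)
qed


theorem lemma4p2:
  fixes M :: nat
    and S :: "nat \<Rightarrow> 'a::metric_space set"
    and Q :: "real \<Rightarrow> 'a \<Rightarrow> ('a \<times> real) measure"
    and Pc :: "nat \<Rightarrow> nat \<Rightarrow> real \<Rightarrow> real"
    and \<tau> :: "nat \<Rightarrow> nat \<Rightarrow> real \<Rightarrow> real"
    and a b c :: nat
    and f :: "real \<Rightarrow> real"
  assumes kernel_prob: "\<And>\<epsilon> x. \<epsilon> > 0 \<Longrightarrow> prob_space (Q \<epsilon> x)"
    and kernel_sets: "\<And>\<epsilon> x. \<epsilon> > 0 \<Longrightarrow> sets (Q \<epsilon> x) = sets (borel \<Otimes>\<^sub>M borel)"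
    and kernel_time: "\<And>\<epsilon> x. \<epsilon> > 0 \<Longrightarrow> emeasure (Q \<epsilon> x) (UNIV \<times> {0..}) = 1"
    and kernel_meas: "\<And>\<epsilon> A. \<epsilon> > 0 \<Longrightarrow> A \<in> sets (borel \<Otimes>\<^sub>M borel) \<Longrightarrow>
                        (\<lambda>x. emeasure (Q \<epsilon> x) A) \<in> borel_measurable borel"
    and S_borel: "\<And>i. i \<in> {1..M} \<Longrightarrow> S i \<in> sets borel"
    and S_disj: "\<And>i j. i \<in> {1..M} \<Longrightarrow> j \<in> {1..M} \<Longrightarrow> i \<noteq> j \<Longrightarrow> S i \<inter> S j = {}"
    and S_cover: "(\<Union>i\<in>{1..M}. S i) = UNIV"
    and no_self: "\<And>\<epsilon> i x. \<epsilon> > 0 \<Longrightarrow> i \<in> {1..M} \<Longrightarrow> x \<in> S i \<Longrightarrow> Pk (Q \<epsilon> x) (S i) = 0"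
    and Pc_diag: "\<And>\<epsilon> i. \<epsilon> > 0 \<Longrightarrow> Pc i i \<epsilon> = 0"
    and dichotomy: "\<And>i j. i \<in> {1..M} \<Longrightarrow> j \<in> {1..M} \<Longrightarrow> i \<noteq> j \<Longrightarrow>
          (\<forall>\<epsilon>>0. Pc i j \<epsilon> = 0 \<and> (\<forall>x\<in>S i. Pk (Q \<epsilon> x) (S j) = 0))
        \<or> ((\<forall>\<epsilon>>0. Pc i j \<epsilon> > 0 \<and> (\<forall>x\<in>S i. Pk (Q \<epsilon> x) (S j) > 0))
           \<and> (\<forall>e>0. \<forall>\<^sub>F \<epsilon> in at_right 0. \<forall>x\<in>S i. \<bar>Pk (Q \<epsilon> x) (S j) / Pc i j \<epsilon> - 1\<bar> < e))"
    and tau_pos: "\<And>\<epsilon> i j. i \<in> {1..M} \<Longrightarrow> j \<in> {1..M} \<Longrightarrow> conn Pc i j \<Longrightarrow> \<epsilon> > 0 \<Longrightarrow> \<tau> i j \<epsilon> > 0"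
    and mean_conv: "\<And>i j. i \<in> {1..M} \<Longrightarrow> j \<in> {1..M} \<Longrightarrow> conn Pc i j \<Longrightarrow>
          \<forall>e>0. \<forall>\<^sub>F \<epsilon> in at_right 0. \<forall>x\<in>S i. \<bar>meanT (Q \<epsilon> x) (S j) / \<tau> i j \<epsilon> - 1\<bar> < e"
    and law_unif: "\<And>i j g. i \<in> {1..M} \<Longrightarrow> j \<in> {1..M} \<Longrightarrow> conn Pc i j \<Longrightarrow>
          continuous_on {0..} g \<Longrightarrow> bounded (g ` {0..}) \<Longrightarrow>
          \<forall>e>0. \<forall>\<^sub>F \<epsilon> in at_right 0. \<forall>x1\<in>S i. \<forall>x2\<in>S i.
            \<bar>ET (Q \<epsilon> x1) (S j) (\<lambda>t. g (t / \<tau> i j \<epsilon>))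
             - ET (Q \<epsilon> x2) (S j) (\<lambda>t. g (t / \<tau> i j \<epsilon>))\<bar> < e"
    and abc: "a \<in> {1..M}" "b \<in> {1..M}" "c \<in> {1..M}"
    and ab: "conn Pc a b" and bc: "conn Pc b c"
    and f_cont: "continuous_on {0..} f" and f_bdd: "bounded (f ` {0..})"
  shows "\<forall>e>0. \<forall>\<^sub>F \<epsilon> in at_right 0. \<forall>xb\<in>S a \<times> {b}. \<forall>y\<in>S a.
           \<bar>ET (Qbar M S Q \<epsilon> xb) (S b \<times> {c}) (\<lambda>t. f (t / \<tau> a b \<epsilon>))
            - ET (Q \<epsilon> y) (S b) (\<lambda>t. f (t / \<tau> a b \<epsilon>))\<bar> < e"
  proof (intro allI impI)
  fix e :: real assume e: "e > 0"
  have ab_ne: "a \<noteq> b" using ab Pc_diag unfolding conn_def by auto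
  have bc_ne: "b \<noteq> c" using bc Pc_diag unfolding conn_def by auto
  have dab: "(\<forall>\<epsilon>>0. Pc a b \<epsilon> > 0 \<and> (\<forall>x\<in>S a. Pk (Q \<epsilon> x) (S b) > 0))"
  proof -
    have "\<not> (\<forall>\<epsilon>>0. Pc a b \<epsilon> = 0)" using ab unfolding conn_def by auto
    then show ?thesis using dichotomy[OF abc(1) abc(2) ab_ne] by blast
  qed
  have dbc: "(\<forall>\<epsilon>>0. Pc b c \<epsilon> > 0 \<and> (\<forall>x\<in>S b. Pk (Q \<epsilon> x) (S c) > 0))
           \<and> (\<forall>e>0. \<forall>\<^sub>F \<epsilon> in at_right 0. \<forall>x\<in>S b. \<bar>Pk (Q \<epsilon> x) (S c) / Pc b c \<epsilon> - 1\<bar> < e)"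
  proof -
    have "\<not> (\<forall>\<epsilon>>0. Pc b c \<epsilon> = 0)" using bc unfolding conn_def by auto
    then show ?thesis using dichotomy[OF abc(2) abc(3) bc_ne] by blast
  qed
  obtain Bf where Bf: "Bf > 0" "\<And>t. t \<in> {0..} \<Longrightarrow> \<bar>f t\<bar> \<le> Bf"
    using f_bdd unfolding bounded_pos by auto
  define \<delta> where "\<delta> = min (1/2) (e / (16 * Bf))"
  have \<delta>pos: "\<delta> > 0" unfolding \<delta>_def using e Bf by auto
  have \<delta>le: "\<delta> \<le> 1/2" unfolding \<delta>_def by auto
  have \<delta>B: "4 * Bf * \<delta> \<le> e / 4"
  proof -
    have "\<delta> \<le> e / (16 * Bf)" unfolding \<delta>_def by auto
    then have "4 * Bf * \<delta> \<le> 4 * Bf * (e / (16 * Bf))" using Bf by (intro mult_left_mono) auto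
    also have "\<dots> = e / 4" using Bf by (simp add: field_simps)
    finally show ?thesis .
  qed
  have E1: "\<forall>\<^sub>F \<epsilon> in at_right 0. \<forall>x\<in>S b. \<bar>Pk (Q \<epsilon> x) (S c) / Pc b c \<epsilon> - 1\<bar> < \<delta>"
    using dbc \<delta>pos by blast
  have E2: "\<forall>\<^sub>F \<epsilon> in at_right 0. \<forall>x1\<in>S a. \<forall>x2\<in>S a.
            \<bar>ET (Q \<epsilon> x1) (S b) (\<lambda>t. f (t / \<tau> a b \<epsilon>)) - ET (Q \<epsilon> x2) (S b) (\<lambda>t. f (t / \<tau> a b \<epsilon>))\<bar> < e/2"
  proof -
    have "e/2 > 0" using e by simp
    then show ?thesis using law_unif[OF abc(1) abc(2) ab f_cont f_bdd] by blast
  qed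
  have E3: "\<forall>\<^sub>F \<epsilon> in at_right (0::real). 0 < \<epsilon>" by (rule eventually_at_right_less)
  show "\<forall>\<^sub>F \<epsilon> in at_right 0. \<forall>xb\<in>S a \<times> {b}. \<forall>y\<in>S a.
           \<bar>ET (Qbar M S Q \<epsilon> xb) (S b \<times> {c}) (\<lambda>t. f (t / \<tau> a b \<epsilon>))
            - ET (Q \<epsilon> y) (S b) (\<lambda>t. f (t / \<tau> a b \<epsilon>))\<bar> < e"
  proof (rule eventually_mono[OF eventually_conj[OF E1 eventually_conj[OF E2 E3]]], intro ballI)
    fix \<epsilon> :: real and xb y
    assume H: "(\<forall>x\<in>S b. \<bar>Pk (Q \<epsilon> x) (S c) / Pc b c \<epsilon> - 1\<bar> < \<delta>) \<and>
            (\<forall>x1\<in>S a. \<forall>x2\<in>S a.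
            \<bar>ET (Q \<epsilon> x1) (S b) (\<lambda>t. f (t / \<tau> a b \<epsilon>)) - ET (Q \<epsilon> x2) (S b) (\<lambda>t. f (t / \<tau> a b \<epsilon>))\<bar> < e/2) \<and> 0 < \<epsilon>"
      and xb: "xb \<in> S a \<times> {b}" and y: "y \<in> S a"
    obtain x where x: "x \<in> S a" and xbx: "xb = (x, b)" using xb by auto
    have eps: "0 < \<epsilon>" using H by auto
    define g where "g t = f (t / \<tau> a b \<epsilon>)" for t
    have setsT: "sets (Tlaw \<mu> B) = sets borel" for \<mu> :: "('a \<times> real) measure" and B
      unfolding Tlaw_def by simp
    show "\<bar>ET (Qbar M S Q \<epsilon> xb) (S b \<times> {c}) (\<lambda>t. f (t / \<tau> a b \<epsilon>))
            - ET (Q \<epsilon> y) (S b) (\<lambda>t. f (t / \<tau> a b \<epsilon>))\<bar> < e"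
    proof (cases "g \<in> borel_measurable borel")
      case False
      have z: "ET \<mu> B g = 0" for \<mu> :: "('a \<times> real) measure" and B
      proof -
        have "g \<notin> borel_measurable (Tlaw \<mu> B)"
          using False measurable_cong_sets[OF setsT[of \<mu> B] refl] by blast
        then have "\<not> integrable (Tlaw \<mu> B) g" by auto
        then show ?thesis unfolding ET_def by (rule not_integrable_integral_eq)
      qed
      have z2: "ET (Qbar M S Q \<epsilon> xb) (S b \<times> {c}) g = 0"
      proof -
        have "sets (Tlaw (Qbar M S Q \<epsilon> xb) (S b \<times> {c})) = sets borel" unfolding Tlaw_def by simp
        then have "g \<notin> borel_measurable (Tlaw (Qbar M S Q \<epsilon> xb) (S b \<times> {c}))"
          using False measurable_cong_sets[OF _ refl] by blast
        then have "\<not> integrable (Tlaw (Qbar M S Q \<epsilon> xb) (S b \<times> {c})) g" by auto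
        then show ?thesis unfolding ET_def by (rule not_integrable_integral_eq)
      qed
      show ?thesis using z[of "Q \<epsilon> y" "S b"] z2 e unfolding g_def by simp
    next
      case True
      note gm = True
      define Qx where "Qx = Q \<epsilon> x"
      interpret Qx: prob_space Qx unfolding Qx_def using kernel_prob[OF eps] .
      have ks: "sets (Q \<epsilon> z) = sets (borel \<Otimes>\<^sub>M borel)" for z using kernel_sets[OF eps] .
      have ksx: "sets Qx = sets (borel \<Otimes>\<^sub>M borel)" unfolding Qx_def by (rule ks)
      have km: "A \<in> sets (borel \<Otimes>\<^sub>M borel) \<Longrightarrow> (\<lambda>x. emeasure (Q \<epsilon> x) A) \<in> borel_measurable borel" for A
        using kernel_meas[OF eps] by blast
      define hh where "hh = (\<lambda>z::'a \<times> real. indicator (S b \<times> {0..}) z * (Pk (Q \<epsilon> (fst z)) (S c) / Pk (Q \<epsilon> x) (S b)))"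
      define U where "U = (\<lambda>z::'a \<times> real. indicator (S b \<times> {0..}) z :: real)"
      have Sbm: "S b \<in> sets borel" using S_borel abc by auto
      have SBm: "S b \<times> {0..} \<in> sets Qx" unfolding ksx using Sbm by (intro pair_measureI) auto
      have Pxpos: "Pk Qx (S b) > 0" using dab eps x unfolding Qx_def by auto
      have Pcpos: "Pc b c \<epsilon> > 0" using dbc eps by auto
      have tpos: "\<tau> a b \<epsilon> > 0" using tau_pos[OF abc(1) abc(2) ab eps] .
      have Pm: "(\<lambda>y. Pk (Q \<epsilon> y) (S c)) \<in> borel_measurable borel"
        by (rule Pk_meas[OF km]) (use S_borel abc in auto)
      have hhm: "hh \<in> borel_measurable Qx"
      proof -
        have "hh \<in> borel_measurable (borel \<Otimes>\<^sub>M borel)"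
          unfolding hh_def using Pm Sbm by measurable
        then show ?thesis using measurable_cong_sets[OF ksx refl] by blast
      qed
      have hh0: "0 \<le> hh z" for z unfolding hh_def by (auto simp: Pk_def indicator_def)
      have U0: "0 \<le> U z" for z unfolding U_def by auto
      have Ui: "integrable Qx U" unfolding U_def
        by (rule integrable_real_indicator[OF SBm]) (simp add: Qx.emeasure_finite less_top[symmetric])
      have intU: "integral\<^sup>L Qx U = Pk Qx (S b)"
        unfolding U_def Pk_def using SBm by (simp add: sets.Int_space_eq2)
      have snm: "snd \<in> measurable Qx borel" using measurable_cong_sets[OF ksx refl] measurable_snd by blast
      have Gm: "(\<lambda>z. g (snd z)) \<in> borel_measurable Qx" using measurable_compose[OF snm gm] .
      have eqbar: "ET (Qbar M S Q \<epsilon> xb) (S b \<times> {c}) g = (\<integral>z. hh z * g (snd z) \<partial>Qx) / integral\<^sup>L Qx hh"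
      proof -
        have "Tlaw (Qbar M S Q \<epsilon> (x,b)) (S b \<times> {c}) =
           scale_measure (ennreal (1 / (\<integral>z. hh z \<partial>Q \<epsilon> x)))
             (distr (density (Q \<epsilon> x) (\<lambda>z. ennreal (hh z))) borel snd)"
          by (rule Qbar_Tlaw[where Q=Q and \<epsilon>=\<epsilon> and S=S and M=M and b=b and c=c and x=x, OF ks kernel_prob[OF eps] km S_borel abc(2) abc(3) hh_def])
        then show ?thesis unfolding ET_def xbx
          using ET_formula[where r="1 / integral\<^sup>L Qx hh", OF ksx hhm hh0 gm] hh0
          by (simp add: Qx_def integral_nonneg)
      qed
      have eqx: "ET Qx (S b) g = (\<integral>z. U z * g (snd z) \<partial>Qx) / integral\<^sup>L Qx U"
      proof -
        have "Tlaw Qx (S b) = scale_measure (ennreal (1 / Pk Qx (S b))) (distr (density Qx (\<lambda>z. ennreal (U z))) borel snd)"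
          unfolding Tlaw_def U_def by (simp add: ennreal_indicator)
        then show ?thesis unfolding ET_def
          using ET_formula[where r="1 / Pk Qx (S b)", OF ksx _ U0 gm] Pxpos intU SBm
          unfolding U_def by simp
      qed
      define k where "k = Pk Qx (S b) / Pc b c \<epsilon>"
      have kpos: "k > 0" unfolding k_def using Pxpos Pcpos by simp
      have VU: "\<bar>k * hh z - U z\<bar> \<le> \<delta> * U z" for z
      proof (cases "z \<in> S b \<times> {0..}")
        case True
        then have "fst z \<in> S b" by auto
        then have "\<bar>Pk (Q \<epsilon> (fst z)) (S c) / Pc b c \<epsilon> - 1\<bar> < \<delta>" using H by auto
        moreover have "k * hh z = Pk (Q \<epsilon> (fst z)) (S c) / Pc b c \<epsilon>"
          unfolding k_def hh_def using True Pxpos Pcpos by (simp add: Qx_def)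
        ultimately show ?thesis using True unfolding U_def by simp
      next
        case False
        then show ?thesis unfolding U_def hh_def by simp
      qed
      have GB: "\<bar>g (snd z)\<bar> \<le> Bf" if "U z \<noteq> 0" for z
      proof -
        have "snd z \<ge> 0" using that unfolding U_def by (auto simp: indicator_def mem_Times_iff)
        then have "snd z / \<tau> a b \<epsilon> \<in> {0..}" using tpos by auto
        then show ?thesis unfolding g_def using Bf by blast
      qed
      have est: "\<bar>(\<integral>z. hh z * g (snd z) \<partial>Qx) / integral\<^sup>L Qx hh - (\<integral>z. U z * g (snd z) \<partial>Qx) / integral\<^sup>L Qx U\<bar> \<le> 4 * Bf * \<delta>"
        by (rule ratio_est[OF Qx.finite_measure_axioms Ui hhm Gm U0 _ kpos VU GB])
           (use intU Pxpos \<delta>pos \<delta>le Bf in auto)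
      have "\<bar>ET Qx (S b) g - ET (Q \<epsilon> y) (S b) g\<bar> < e/2"
        using H x y unfolding Qx_def g_def by blast
      then have "\<bar>ET (Qbar M S Q \<epsilon> xb) (S b \<times> {c}) g - ET (Q \<epsilon> y) (S b) g\<bar> < e"
        using est eqbar eqx \<delta>B e by linarith
      then show ?thesis unfolding g_def .
    qed
  qed
qed

end
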